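(* Let $G$ be a group acting without inversions on a tree $T$, let $H$ be a tame subgroup of $G$ containing hyperbolic elements, and let $\widetilde{X}$ be the graph obtained from $X=T_{H}/H$ by attaching a loop at each $H$-non-degenerate vertex. Then $$\overline{C}_{T}(H)=\overline{r}(\widetilde{X})=\frac{1}{2}\sum\big(\deg_{\widetilde{X}}([v]_{H})-2\big),$$ where the sum is over all vertices $[v]_{H}$ of $\widetilde{X}$.
   Context: $T_H$ is the unique minimal $H$-invariant subtree of $T$; $H$ tame with a hyperbolic element means $T_H/H$ is finite. A vertex $v$ of $T_H$ is $H$-degenerate if $H_v=H_e$ for some edge $e$ of $T_H$ with initial vertex $v$; otherwise $[v]_H$ is non-degenerate. $C_T(H)=r(T_H/H)+|V_{ndeg}(T_H/H)|$ (rank of the fundamental group plus number of non-degenerate vertices; this equals $r(T/H)+|V_{ndeg}(T/H)|$), and $\overline{C}_T(H)=\max\{C_T(H)-1,0\}$. For a finite connected graph $Y$, $\overline{r}(Y)=\max\{r(Y)-1,0\}$ where $r(Y)$ is the rank of its fundamental group. $\deg_{\widetilde X}(w)$ is the number of (oriented) edges with initial vertex $w$, so an attached loop contributes $2$. *)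

theory Defs
  imports Complex_Main "HOL-Algebra.Group"
begin

record ('v, 'e) sgraph =
  verts :: "'v set"
  arcs :: "'e set"
  src :: "'e \<Rightarrow> 'v"
  rev_arc :: "'e \<Rightarrow> 'e"

definition tgt :: "('v, 'e) sgraph \<Rightarrow> 'e \<Rightarrow> 'v" where
  "tgt Y e = src Y (rev_arc Y e)"

definition sgraph :: "('v, 'e) sgraph \<Rightarrow> bool" where
  "sgraph Y \<longleftrightarrow> (\<forall>e\<in>arcs Y. rev_arc Y e \<in> arcs Y \<and> rev_arc Y (rev_arc Y e) = e
      \<and> rev_arc Y e \<noteq> e \<and> src Y e \<in> verts Y)"

fun walk :: "('v, 'e) sgraph \<Rightarrow> 'v \<Rightarrow> 'e list \<Rightarrow> 'v \<Rightarrow> bool" where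
  "walk Y v [] w \<longleftrightarrow> v = w \<and> v \<in> verts Y"
| "walk Y v (e # es) w \<longleftrightarrow> e \<in> arcs Y \<and> src Y e = v \<and> walk Y (tgt Y e) es w"

definition reduced :: "('v, 'e) sgraph \<Rightarrow> 'e list \<Rightarrow> bool" where
  "reduced Y es \<longleftrightarrow> (\<forall>i. Suc i < length es \<longrightarrow> es ! Suc i \<noteq> rev_arc Y (es ! i))"

definition connected_graph :: "('v, 'e) sgraph \<Rightarrow> bool" where
  "connected_graph Y \<longleftrightarrow> verts Y \<noteq> {} \<and> (\<forall>v\<in>verts Y. \<forall>w\<in>verts Y. \<exists>es. walk Y v es w)"

definition is_tree :: "('v, 'e) sgraph \<Rightarrow> bool" where
  "is_tree Y \<longleftrightarrow> sgraph Y \<and> connected_graph Y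
      \<and> \<not> (\<exists>v es. es \<noteq> [] \<and> walk Y v es v \<and> reduced Y es)"

definition subtree :: "('v, 'e) sgraph \<Rightarrow> 'v set \<Rightarrow> 'e set \<Rightarrow> bool" where
  "subtree T VS ES \<longleftrightarrow> VS \<subseteq> verts T \<and> ES \<subseteq> arcs T
      \<and> is_tree (T\<lparr>verts := VS, arcs := ES\<rparr>)"

text \<open>Rank of the fundamental group of a finite connected graph: number of geometric
  (unoriented) edges minus number of vertices plus one.\<close>
definition graph_rank :: "('v, 'e) sgraph \<Rightarrow> int" where
  "graph_rank Y = int (card (arcs Y)) div 2 - int (card (verts Y)) + 1"

definition rbar :: "('v, 'e) sgraph \<Rightarrow> int" where
  "rbar Y = max (graph_rank Y - 1) 0"

text \<open>Number of oriented edges with initial vertex w (a loop contributes 2).\<close>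
definition deg :: "('v, 'e) sgraph \<Rightarrow> 'v \<Rightarrow> nat" where
  "deg Y w = card {e \<in> arcs Y. src Y e = w}"

definition tree_action ::
  "('g, 'b) monoid_scheme \<Rightarrow> ('v, 'e) sgraph \<Rightarrow> ('g \<Rightarrow> 'v \<Rightarrow> 'v) \<Rightarrow> ('g \<Rightarrow> 'e \<Rightarrow> 'e) \<Rightarrow> bool"
  where
  "tree_action G T av ae \<longleftrightarrow> group G \<and> is_tree T
    \<and> (\<forall>g\<in>carrier G. av g ` verts T \<subseteq> verts T \<and> ae g ` arcs T \<subseteq> arcs T)
    \<and> (\<forall>v\<in>verts T. av \<one>\<^bsub>G\<^esub> v = v) \<and> (\<forall>e\<in>arcs T. ae \<one>\<^bsub>G\<^esub> e = e)
    \<and> (\<forall>g\<in>carrier G. \<forall>h\<in>carrier G. \<forall>v\<in>verts T. av (g \<otimes>\<^bsub>G\<^esub> h) v = av g (av h v))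
    \<and> (\<forall>g\<in>carrier G. \<forall>h\<in>carrier G. \<forall>e\<in>arcs T. ae (g \<otimes>\<^bsub>G\<^esub> h) e = ae g (ae h e))
    \<and> (\<forall>g\<in>carrier G. \<forall>e\<in>arcs T. src T (ae g e) = av g (src T e)
                                   \<and> ae g (rev_arc T e) = rev_arc T (ae g e))"

definition without_inversions ::
  "('g, 'b) monoid_scheme \<Rightarrow> ('v, 'e) sgraph \<Rightarrow> ('g \<Rightarrow> 'e \<Rightarrow> 'e) \<Rightarrow> bool" where
  "without_inversions G T ae \<longleftrightarrow> (\<forall>g\<in>carrier G. \<forall>e\<in>arcs T. ae g e \<noteq> rev_arc T e)"

text \<open>For an action without inversions, an element is elliptic iff it fixes a vertex;
  hyperbolic means not elliptic.\<close>
definition hyperbolic :: "('v, 'e) sgraph \<Rightarrow> ('g \<Rightarrow> 'v \<Rightarrow> 'v) \<Rightarrow> 'g \<Rightarrow> bool" where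
  "hyperbolic T av g \<longleftrightarrow> (\<forall>v\<in>verts T. av g v \<noteq> v)"

definition invariant_subtree ::
  "('v, 'e) sgraph \<Rightarrow> ('g \<Rightarrow> 'v \<Rightarrow> 'v) \<Rightarrow> ('g \<Rightarrow> 'e \<Rightarrow> 'e) \<Rightarrow> 'g set \<Rightarrow> 'v set \<Rightarrow> 'e set \<Rightarrow> bool"
  where
  "invariant_subtree T av ae H VS ES \<longleftrightarrow> subtree T VS ES
     \<and> (\<forall>h\<in>H. av h ` VS \<subseteq> VS \<and> ae h ` ES \<subseteq> ES)"

definition minimal_invariant_subtree ::
  "('v, 'e) sgraph \<Rightarrow> ('g \<Rightarrow> 'v \<Rightarrow> 'v) \<Rightarrow> ('g \<Rightarrow> 'e \<Rightarrow> 'e) \<Rightarrow> 'g set \<Rightarrow> 'v set \<Rightarrow> 'e set \<Rightarrow> bool"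
  where
  "minimal_invariant_subtree T av ae H VS ES \<longleftrightarrow> invariant_subtree T av ae H VS ES
     \<and> (\<forall>VS' ES'. invariant_subtree T av ae H VS' ES' \<and> VS' \<subseteq> VS \<and> ES' \<subseteq> ES
            \<longrightarrow> VS' = VS \<and> ES' = ES)"

definition orb :: "('g \<Rightarrow> 'a \<Rightarrow> 'a) \<Rightarrow> 'g set \<Rightarrow> 'a \<Rightarrow> 'a set" where
  "orb act H x = (\<lambda>h. act h x) ` H"

definition stab :: "('g \<Rightarrow> 'a \<Rightarrow> 'a) \<Rightarrow> 'g set \<Rightarrow> 'a \<Rightarrow> 'g set" where
  "stab act H x = {h \<in> H. act h x = x}"

definition quotient_graph ::
  "('v, 'e) sgraph \<Rightarrow> ('g \<Rightarrow> 'v \<Rightarrow> 'v) \<Rightarrow> ('g \<Rightarrow> 'e \<Rightarrow> 'e) \<Rightarrow> 'g set \<Rightarrow> 'v set \<Rightarrow> 'e set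
     \<Rightarrow> ('v set, 'e set) sgraph" where
  "quotient_graph T av ae H VS ES =
     \<lparr> verts = orb av H ` VS, arcs = orb ae H ` ES,
       src = (\<lambda>Q. orb av H (src T (SOME e. e \<in> Q))),
       rev_arc = (\<lambda>Q. orb ae H (rev_arc T (SOME e. e \<in> Q))) \<rparr>"

definition degenerate ::
  "('v, 'e) sgraph \<Rightarrow> ('g \<Rightarrow> 'v \<Rightarrow> 'v) \<Rightarrow> ('g \<Rightarrow> 'e \<Rightarrow> 'e) \<Rightarrow> 'g set \<Rightarrow> 'e set \<Rightarrow> 'v \<Rightarrow> bool"
  where
  "degenerate T av ae H ES v \<longleftrightarrow> (\<exists>e\<in>ES. src T e = v \<and> stab av H v = stab ae H e)"

definition ndeg_verts ::
  "('v, 'e) sgraph \<Rightarrow> ('g \<Rightarrow> 'v \<Rightarrow> 'v) \<Rightarrow> ('g \<Rightarrow> 'e \<Rightarrow> 'e) \<Rightarrow> 'g set \<Rightarrow> 'v set \<Rightarrow> 'e set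
     \<Rightarrow> 'v set set" where
  "ndeg_verts T av ae H VS ES = {orb av H v | v. v \<in> VS \<and> \<not> degenerate T av ae H ES v}"

definition C_T ::
  "('v, 'e) sgraph \<Rightarrow> ('g \<Rightarrow> 'v \<Rightarrow> 'v) \<Rightarrow> ('g \<Rightarrow> 'e \<Rightarrow> 'e) \<Rightarrow> 'g set \<Rightarrow> 'v set \<Rightarrow> 'e set \<Rightarrow> int"
  where
  "C_T T av ae H VS ES = graph_rank (quotient_graph T av ae H VS ES)
       + int (card (ndeg_verts T av ae H VS ES))"

definition Cbar_T ::
  "('v, 'e) sgraph \<Rightarrow> ('g \<Rightarrow> 'v \<Rightarrow> 'v) \<Rightarrow> ('g \<Rightarrow> 'e \<Rightarrow> 'e) \<Rightarrow> 'g set \<Rightarrow> 'v set \<Rightarrow> 'e set \<Rightarrow> int"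
  where
  "Cbar_T T av ae H VS ES = max (C_T T av ae H VS ES - 1) 0"

definition attach_loops :: "('v, 'e) sgraph \<Rightarrow> 'v set \<Rightarrow> ('v, 'e + ('v \<times> bool)) sgraph" where
  "attach_loops Y L =
     \<lparr> verts = verts Y, arcs = Inl ` arcs Y \<union> Inr ` (L \<times> UNIV),
       src = case_sum (src Y) fst,
       rev_arc = case_sum (\<lambda>e. Inl (rev_arc Y e)) (\<lambda>(w, b). Inr (w, \<not> b)) \<rparr>"

end

theory Submission
  imports Defs
begin


definition isact :: "('g, 'b) monoid_scheme \<Rightarrow> 'a set \<Rightarrow> ('g \<Rightarrow> 'a \<Rightarrow> 'a) \<Rightarrow> bool" where
  "isact G S act \<longleftrightarrow> (\<forall>g\<in>carrier G. act g ` S \<subseteq> S) \<and> (\<forall>x\<in>S. act \<one>\<^bsub>G\<^esub> x = x)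
     \<and> (\<forall>g\<in>carrier G. \<forall>h\<in>carrier G. \<forall>x\<in>S. act (g \<otimes>\<^bsub>G\<^esub> h) x = act g (act h x))"

lemma tree_action_isact:
  assumes "tree_action G T av ae"
  shows "isact G (verts T) av" "isact G (arcs T) ae"
  using assms unfolding tree_action_def isact_def by auto

context
  fixes G :: "('g, 'b) monoid_scheme" and S :: "'a set" and act and H
  assumes A: "isact G S act" and grp: "group G" and sub: "subgroup H G"
begin

lemma HG: "h \<in> H \<Longrightarrow> h \<in> carrier G"
  using subgroup.subset[OF sub] by (rule subsetD)

lemma act_in: "h \<in> H \<Longrightarrow> x \<in> S \<Longrightarrow> act h x \<in> S"
  using A HG unfolding isact_def by blast

lemma act_mult: "g \<in> H \<Longrightarrow> h \<in> H \<Longrightarrow> x \<in> S \<Longrightarrow> act (g \<otimes>\<^bsub>G\<^esub> h) x = act g (act h x)"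
  using A HG unfolding isact_def by blast

lemma act_one: "x \<in> S \<Longrightarrow> act \<one>\<^bsub>G\<^esub> x = x"
  using A unfolding isact_def by blast

lemma act_inv1: "h \<in> H \<Longrightarrow> x \<in> S \<Longrightarrow> act (inv\<^bsub>G\<^esub> h) (act h x) = x"
proof -
  assume h: "h \<in> H" and x: "x \<in> S"
  have "act (inv\<^bsub>G\<^esub> h) (act h x) = act (inv\<^bsub>G\<^esub> h \<otimes>\<^bsub>G\<^esub> h) x"
    by (rule act_mult[OF subgroup.m_inv_closed[OF sub h] h x, symmetric])
  also have "\<dots> = x" using HG[OF h] grp act_one x by (simp add: group.l_inv)
  finally show ?thesis .
qed

lemma act_inv2: "h \<in> H \<Longrightarrow> x \<in> S \<Longrightarrow> act h (act (inv\<^bsub>G\<^esub> h) x) = x"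
proof -
  assume h: "h \<in> H" and x: "x \<in> S"
  have "act h (act (inv\<^bsub>G\<^esub> h) x) = act (h \<otimes>\<^bsub>G\<^esub> inv\<^bsub>G\<^esub> h) x"
    by (rule act_mult[OF h subgroup.m_inv_closed[OF sub h] x, symmetric])
  also have "\<dots> = x" using HG[OF h] grp act_one x by (simp add: group.r_inv)
  finally show ?thesis .
qed

lemma orb_mem: "x \<in> S \<Longrightarrow> x \<in> orb act H x"
proof -
  assume x: "x \<in> S"
  have "\<one>\<^bsub>G\<^esub> \<in> H" by (rule subgroup.one_closed[OF sub])
  moreover have "x = act \<one>\<^bsub>G\<^esub> x" using act_one x by simp
  ultimately show ?thesis unfolding orb_def by (rule rev_image_eqI)
qed

lemma orb_sub: "x \<in> S \<Longrightarrow> orb act H x \<subseteq> S"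
  unfolding orb_def using act_in by blast

lemma orb_shift: "h \<in> H \<Longrightarrow> x \<in> S \<Longrightarrow> orb act H (act h x) = orb act H x"
proof
  assume h: "h \<in> H" and x: "x \<in> S"
  show "orb act H (act h x) \<subseteq> orb act H x"
  proof
    fix y assume "y \<in> orb act H (act h x)"
    then obtain k where k: "k \<in> H" "y = act k (act h x)" unfolding orb_def by blast
    have "act (k \<otimes>\<^bsub>G\<^esub> h) x = act k (act h x)" by (rule act_mult[OF k(1) h x])
    then have "y = act (k \<otimes>\<^bsub>G\<^esub> h) x" using k(2) by simp
    moreover have "k \<otimes>\<^bsub>G\<^esub> h \<in> H" by (rule subgroup.m_closed[OF sub k(1) h])
    ultimately show "y \<in> orb act H x" unfolding orb_def by (rule image_eqI)
  qed
  show "orb act H x \<subseteq> orb act H (act h x)"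
  proof
    fix y assume "y \<in> orb act H x"
    then obtain k where k: "k \<in> H" "y = act k x" unfolding orb_def by blast
    have hi: "inv\<^bsub>G\<^esub> h \<in> H" by (rule subgroup.m_inv_closed[OF sub h])
    have "act (inv\<^bsub>G\<^esub> h) (act h x) = x" by (rule act_inv1[OF h x])
    then have "y = act k (act (inv\<^bsub>G\<^esub> h) (act h x))" using k(2) by simp
    also have "\<dots> = act (k \<otimes>\<^bsub>G\<^esub> inv\<^bsub>G\<^esub> h) (act h x)"
      by (rule act_mult[OF k(1) hi act_in[OF h x], symmetric])
    finally have "y = act (k \<otimes>\<^bsub>G\<^esub> inv\<^bsub>G\<^esub> h) (act h x)" .
    moreover have "k \<otimes>\<^bsub>G\<^esub> inv\<^bsub>G\<^esub> h \<in> H" by (rule subgroup.m_closed[OF sub k(1) hi])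
    ultimately show "y \<in> orb act H (act h x)" unfolding orb_def by (rule image_eqI)
  qed
qed

lemma orb_eq: "y \<in> orb act H x \<Longrightarrow> x \<in> S \<Longrightarrow> orb act H y = orb act H x"
proof -
  assume "y \<in> orb act H x" "x \<in> S"
  then obtain h where "h \<in> H" "y = act h x" unfolding orb_def by auto
  then show ?thesis using orb_shift \<open>x \<in> S\<close> by simp
qed

lemma some_orb: "x \<in> S \<Longrightarrow> \<exists>h\<in>H. (SOME y. y \<in> orb act H x) = act h x"
proof -
  assume x: "x \<in> S"
  have "(SOME y. y \<in> orb act H x) \<in> orb act H x" using orb_mem[OF x] by (rule someI)
  then show ?thesis unfolding orb_def by auto
qed

lemma not_orb_shift: "h \<in> H \<Longrightarrow> x \<in> S \<Longrightarrow> y \<in> S \<Longrightarrow> x \<notin> orb act H y \<Longrightarrow> act h x \<notin> orb act H y"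
proof
  assume h: "h \<in> H" and x: "x \<in> S" and y: "y \<in> S" and n: "x \<notin> orb act H y"
    and a: "act h x \<in> orb act H y"
  have "orb act H (act h x) = orb act H y" using orb_eq[OF a y] .
  then have "orb act H x = orb act H y" using orb_shift[OF h x] by simp
  then show False using orb_mem[OF x] n by simp
qed

end

lemma card_fibers:
  assumes "finite A" "finite V" "f ` A \<subseteq> V"
  shows "(\<Sum>w\<in>V. card {a\<in>A. f a = w}) = card A"
proof -
  have "A = (\<Union>w\<in>V. {a\<in>A. f a = w})" using assms(3) by auto
  then have "card A = card (\<Union>w\<in>V. {a\<in>A. f a = w})" by simp
  also have "\<dots> = (\<Sum>w\<in>V. card {a\<in>A. f a = w})"
    by (rule card_UN_disjoint) (use assms in auto)
  finally show ?thesis by simp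
qed

lemma even_invol:
  assumes "finite A" "\<forall>x\<in>A. f x \<in> A \<and> f (f x) = x \<and> f x \<noteq> x"
  shows "even (card A)"
  using assms
proof (induction "card A" arbitrary: A rule: less_induct)
  case less
  show ?case
  proof (cases "A = {}")
    case True then show ?thesis by simp
  next
    case False
    then obtain x where x: "x \<in> A" by blast
    let ?B = "A - {x, f x}"
    have fx: "f x \<in> A" "f x \<noteq> x" using less.prems x by auto
    have cB: "card A = card ?B + 2"
    proof -
      have "card ?B = card A - card {x, f x}"
        using less.prems(1) x fx by (intro card_Diff_subset) auto
      moreover have "card {x, f x} = 2" using fx by simp
      moreover have "card {x, f x} \<le> card A" using less.prems(1) x fx by (intro card_mono) auto
      ultimately show ?thesis by simp
    qed
    have "\<forall>y\<in>?B. f y \<in> ?B \<and> f (f y) = y \<and> f y \<noteq> y"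
    proof
      fix y assume y: "y \<in> ?B"
      then have "f y \<in> A" "f (f y) = y" "f y \<noteq> y" using less.prems by auto
      moreover have "f y \<noteq> x" using y \<open>f (f y) = y\<close> by auto
      moreover have "f y \<noteq> f x" using y less.prems x by (metis Diff_iff insertCI)
      ultimately show "f y \<in> ?B \<and> f (f y) = y \<and> f y \<noteq> y" by auto
    qed
    then have "even (card ?B)" using less.hyps[of ?B] cB less.prems(1) by auto
    then show ?thesis using cB by simp
  qed
qed


context
  fixes G :: "('g, 'b) monoid_scheme"
    and T :: "('v, 'e) sgraph"
    and av :: "'g \<Rightarrow> 'v \<Rightarrow> 'v" and ae :: "'g \<Rightarrow> 'e \<Rightarrow> 'e"
    and H :: "'g set" and VS :: "'v set" and ES :: "'e set"
  assumes act: "tree_action G T av ae"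
    and noinv: "without_inversions G T ae"
    and sub: "subgroup H G"
    and TH: "minimal_invariant_subtree T av ae H VS ES"
begin

lemma grp: "group G" using act unfolding tree_action_def by simp
lemma Av: "isact G (verts T) av" using tree_action_isact[OF act] by simp
lemma Ae: "isact G (arcs T) ae" using tree_action_isact[OF act] by simp
lemma sgT: "sgraph T" using act unfolding tree_action_def is_tree_def by simp
lemma VS_sub: "VS \<subseteq> verts T" using TH unfolding minimal_invariant_subtree_def invariant_subtree_def subtree_def by simp
lemma ES_sub: "ES \<subseteq> arcs T" using TH unfolding minimal_invariant_subtree_def invariant_subtree_def subtree_def by simp
lemma tree1: "is_tree (T\<lparr>verts := VS, arcs := ES\<rparr>)" using TH unfolding minimal_invariant_subtree_def invariant_subtree_def subtree_def by simp
lemma inv_V: "h \<in> H \<Longrightarrow> x \<in> VS \<Longrightarrow> av h x \<in> VS" using TH unfolding minimal_invariant_subtree_def invariant_subtree_def by blast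
lemma inv_E: "h \<in> H \<Longrightarrow> x \<in> ES \<Longrightarrow> ae h x \<in> ES" using TH unfolding minimal_invariant_subtree_def invariant_subtree_def by blast
lemma sg1: "e \<in> ES \<Longrightarrow> rev_arc T e \<in> ES \<and> rev_arc T (rev_arc T e) = e \<and> rev_arc T e \<noteq> e \<and> src T e \<in> VS"
  using tree1 unfolding is_tree_def sgraph_def by simp
lemma sgT1: "e \<in> arcs T \<Longrightarrow> rev_arc T e \<in> arcs T \<and> rev_arc T (rev_arc T e) = e \<and> rev_arc T e \<noteq> e \<and> src T e \<in> verts T"
  using sgT unfolding sgraph_def by simp
lemma HG': "h \<in> H \<Longrightarrow> h \<in> carrier G" using subgroup.subset[OF sub] by (rule subsetD)
lemma eq_src: "h \<in> H \<Longrightarrow> e \<in> arcs T \<Longrightarrow> src T (ae h e) = av h (src T e)"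
  using act HG' unfolding tree_action_def by blast
lemma eq_rev: "h \<in> H \<Longrightarrow> e \<in> arcs T \<Longrightarrow> ae h (rev_arc T e) = rev_arc T (ae h e)"
  using act HG' unfolding tree_action_def by blast
lemma tgt1: "e \<in> ES \<Longrightarrow> tgt T e \<in> VS" using sg1 unfolding tgt_def by blast

lemma walk_mono: "walk (T\<lparr>verts := V2, arcs := E2\<rparr>) x es y \<Longrightarrow> V2 \<subseteq> V1 \<Longrightarrow> E2 \<subseteq> E1
   \<Longrightarrow> walk (T\<lparr>verts := V1, arcs := E1\<rparr>) x es y"
  by (induction es arbitrary: x) (auto simp: tgt_def)

lemma no_leaf:
  assumes v: "v \<in> VS" and e: "e \<in> ES" "src T e = v" and uniq: "\<forall>f\<in>ES. src T f = v \<longrightarrow> f = e"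
  shows False
proof -
  define Ob where "Ob = orb av H v"
  have vT: "v \<in> verts T" using v VS_sub by blast
  have eT: "e \<in> arcs T" using e ES_sub by blast
  have L2: "g = ae h e" if h: "h \<in> H" and g: "g \<in> ES" "src T g = av h v" for h g
  proof -
    have hi: "inv\<^bsub>G\<^esub> h \<in> H" by (rule subgroup.m_inv_closed[OF sub h])
    have gT: "g \<in> arcs T" using g ES_sub by blast
    have "ae (inv\<^bsub>G\<^esub> h) g \<in> ES" using inv_E hi g by blast
    moreover have "src T (ae (inv\<^bsub>G\<^esub> h) g) = v"
      using eq_src[OF hi gT] g act_inv1[OF Av grp sub h vT] by simp
    ultimately have "ae (inv\<^bsub>G\<^esub> h) g = e" using uniq by blast
    then show ?thesis using act_inv2[OF Ae grp sub h gT] by simp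
  qed
  have OV: "Ob \<subseteq> VS" unfolding Ob_def orb_def using inv_V v by blast
  have vO: "v \<in> Ob" unfolding Ob_def using orb_mem[OF Av grp sub vT] .
  have L3: "tgt T e \<notin> Ob"
  proof
    assume "tgt T e \<in> Ob"
    then obtain h where h: "h \<in> H" "tgt T e = av h v" unfolding Ob_def orb_def by auto
    have "rev_arc T e \<in> ES" "src T (rev_arc T e) = av h v" using sg1 e h unfolding tgt_def by auto
    then have "rev_arc T e = ae h e" using L2 h by blast
    moreover have "ae h e \<noteq> rev_arc T e" using noinv HG'[OF h(1)] eT unfolding without_inversions_def by blast
    ultimately show False by simp
  qed
  define VS' where "VS' = VS - Ob"
  define ES' where "ES' = {f\<in>ES. src T f \<notin> Ob \<and> tgt T f \<notin> Ob}"
  have notOb: "av h x \<notin> Ob" if "h \<in> H" "x \<in> verts T" "x \<notin> Ob" for h x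
    using not_orb_shift[OF Av grp sub] that vT unfolding Ob_def by blast
  have inv': "\<forall>h\<in>H. av h ` VS' \<subseteq> VS' \<and> ae h ` ES' \<subseteq> ES'"
  proof (intro ballI conjI subsetI)
    fix h x assume h: "h \<in> H" and "x \<in> av h ` VS'"
    then obtain y where y: "y \<in> VS'" "x = av h y" by blast
    then show "x \<in> VS'" using inv_V h notOb VS_sub unfolding VS'_def by blast
  next
    fix h x assume h: "h \<in> H" and "x \<in> ae h ` ES'"
    then obtain f where f: "f \<in> ES'" "x = ae h f" by blast
    have fT: "f \<in> arcs T" using f ES_sub unfolding ES'_def by blast
    have "src T x = av h (src T f)" using eq_src h fT f by simp
    moreover have "tgt T x = av h (tgt T f)"
      using f h fT eq_rev eq_src sgT1 unfolding tgt_def by metis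
    moreover have "src T f \<in> verts T" "tgt T f \<in> verts T" using sgT1 fT unfolding tgt_def by auto
    ultimately show "x \<in> ES'" using f inv_E h notOb unfolding ES'_def by auto
  qed
  have wk: "\<And>es x. length es = n \<Longrightarrow> walk (T\<lparr>verts := VS, arcs := ES\<rparr>) x es y \<Longrightarrow> x \<notin> Ob \<Longrightarrow> y \<notin> Ob
      \<Longrightarrow> \<exists>es'. walk (T\<lparr>verts := VS', arcs := ES'\<rparr>) x es' y" for n y
  proof (induction n rule: less_induct)
    case (less n es x)
    show ?case
    proof (cases es)
      case Nil
      then have "walk (T\<lparr>verts := VS', arcs := ES'\<rparr>) x [] y" using less.prems unfolding VS'_def by auto
      then show ?thesis by blast
    next
      case (Cons f rest)
      have f: "f \<in> ES" "src T f = x" and wr: "walk (T\<lparr>verts := VS, arcs := ES\<rparr>) (tgt T f) rest y"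
        using less.prems Cons by (auto simp: tgt_def)
      show ?thesis
      proof (cases "tgt T f \<in> Ob")
        case False
        then obtain es' where "walk (T\<lparr>verts := VS', arcs := ES'\<rparr>) (tgt T f) es' y"
          using less.IH[of "length rest" rest "tgt T f"] wr less.prems Cons by auto
        moreover have "f \<in> ES'" using f False less.prems unfolding ES'_def by auto
        ultimately have "walk (T\<lparr>verts := VS', arcs := ES'\<rparr>) x (f # es') y" using f by (simp add: tgt_def)
        then show ?thesis by blast
      next
        case True
        then obtain h where h: "h \<in> H" "tgt T f = av h v" unfolding Ob_def orb_def by auto
        have "rest \<noteq> []" using wr True less.prems by auto
        then obtain g rest' where r: "rest = g # rest'" by (cases rest) auto
        have g: "g \<in> ES" "src T g = tgt T f" and wr': "walk (T\<lparr>verts := VS, arcs := ES\<rparr>) (tgt T g) rest' y"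
          using wr r by (auto simp: tgt_def)
        have "g = ae h e" using L2 h g by simp
        moreover have "rev_arc T f = ae h e" using L2 h sg1[OF f(1)] unfolding tgt_def by simp
        ultimately have "g = rev_arc T f" by simp
        then have "tgt T g = x" using sg1[OF f(1)] f unfolding tgt_def by simp
        then show ?thesis using less.IH[of "length rest'" rest' x] wr' less.prems Cons r by auto
      qed
    qed
  qed
  have tree': "is_tree (T\<lparr>verts := VS', arcs := ES'\<rparr>)"
    unfolding is_tree_def
  proof (intro conjI)
    show "sgraph (T\<lparr>verts := VS', arcs := ES'\<rparr>)"
      unfolding sgraph_def
    proof (intro ballI)
      fix f assume "f \<in> arcs (T\<lparr>verts := VS', arcs := ES'\<rparr>)"
      then have f: "f \<in> ES" "src T f \<notin> Ob" "tgt T f \<notin> Ob" unfolding ES'_def by auto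
      then show "rev_arc (T\<lparr>verts := VS', arcs := ES'\<rparr>) f \<in> arcs (T\<lparr>verts := VS', arcs := ES'\<rparr>) \<and>
         rev_arc (T\<lparr>verts := VS', arcs := ES'\<rparr>) (rev_arc (T\<lparr>verts := VS', arcs := ES'\<rparr>) f) = f \<and>
         rev_arc (T\<lparr>verts := VS', arcs := ES'\<rparr>) f \<noteq> f \<and>
         src (T\<lparr>verts := VS', arcs := ES'\<rparr>) f \<in> verts (T\<lparr>verts := VS', arcs := ES'\<rparr>)"
        using sg1[OF f(1)] unfolding ES'_def VS'_def tgt_def by auto
    qed
    show "connected_graph (T\<lparr>verts := VS', arcs := ES'\<rparr>)"
      unfolding connected_graph_def
    proof (intro conjI ballI)
      show "verts (T\<lparr>verts := VS', arcs := ES'\<rparr>) \<noteq> {}" using L3 tgt1 e unfolding VS'_def by auto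
    next
      fix x y assume "x \<in> verts (T\<lparr>verts := VS', arcs := ES'\<rparr>)" "y \<in> verts (T\<lparr>verts := VS', arcs := ES'\<rparr>)"
      then have xy: "x \<in> VS" "x \<notin> Ob" "y \<in> VS" "y \<notin> Ob" unfolding VS'_def by auto
      have "\<forall>v\<in>VS. \<forall>w\<in>VS. \<exists>es. walk (T\<lparr>verts := VS, arcs := ES\<rparr>) v es w"
        using tree1 unfolding is_tree_def connected_graph_def by simp
      then obtain es where "walk (T\<lparr>verts := VS, arcs := ES\<rparr>) x es y"
        using xy by blast
      then show "\<exists>es. walk (T\<lparr>verts := VS', arcs := ES'\<rparr>) x es y" using wk xy by blast
    qed
    show "\<not> (\<exists>v es. es \<noteq> [] \<and> walk (T\<lparr>verts := VS', arcs := ES'\<rparr>) v es v \<and> reduced (T\<lparr>verts := VS', arcs := ES'\<rparr>) es)"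
    proof
      assume "\<exists>v es. es \<noteq> [] \<and> walk (T\<lparr>verts := VS', arcs := ES'\<rparr>) v es v \<and> reduced (T\<lparr>verts := VS', arcs := ES'\<rparr>) es"
      then obtain w es where "es \<noteq> []" "walk (T\<lparr>verts := VS', arcs := ES'\<rparr>) w es w" "reduced (T\<lparr>verts := VS', arcs := ES'\<rparr>) es"
        by blast
      moreover have "VS' \<subseteq> VS" "ES' \<subseteq> ES" unfolding VS'_def ES'_def by auto
      ultimately have "es \<noteq> []" "walk (T\<lparr>verts := VS, arcs := ES\<rparr>) w es w" "reduced (T\<lparr>verts := VS, arcs := ES\<rparr>) es"
        using walk_mono by (auto simp: reduced_def)
      then show False using tree1 unfolding is_tree_def by blast
    qed
  qed
  have "invariant_subtree T av ae H VS' ES'"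
    unfolding invariant_subtree_def subtree_def using inv' tree' VS_sub ES_sub
    unfolding VS'_def ES'_def by auto
  moreover have "VS' \<subseteq> VS" "ES' \<subseteq> ES" unfolding VS'_def ES'_def by auto
  ultimately have "VS' = VS" using TH unfolding minimal_invariant_subtree_def by blast
  then show False using vO v unfolding VS'_def by blast
qed

end


context
  fixes G :: "('g, 'b) monoid_scheme"
    and T :: "('v, 'e) sgraph"
    and av :: "'g \<Rightarrow> 'v \<Rightarrow> 'v" and ae :: "'g \<Rightarrow> 'e \<Rightarrow> 'e"
    and H :: "'g set" and VS :: "'v set" and ES :: "'e set"
  assumes act: "tree_action G T av ae"
    and noinv: "without_inversions G T ae"
    and sub: "subgroup H G"
    and TH: "minimal_invariant_subtree T av ae H VS ES"
begin

lemma grpC: "group G" using grp[OF act noinv sub TH] .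
lemma AeC: "isact G (arcs T) ae" using Ae[OF act noinv sub TH] .
lemma AvC: "isact G (verts T) av" using Av[OF act noinv sub TH] .

abbreviation "X \<equiv> quotient_graph T av ae H VS ES"
abbreviation "L \<equiv> ndeg_verts T av ae H VS ES"

lemma qsrc: "e \<in> arcs T \<Longrightarrow> src X (orb ae H e) = orb av H (src T e)"
proof -
  assume e: "e \<in> arcs T"
  obtain h where h: "h \<in> H" "(SOME y. y \<in> orb ae H e) = ae h e"
    using some_orb[OF AeC grpC sub e] by blast
  have "src X (orb ae H e) = orb av H (av h (src T e))"
    unfolding quotient_graph_def using h eq_src[OF act noinv sub TH h(1) e] by simp
  also have "\<dots> = orb av H (src T e)"
    using orb_shift[OF AvC grpC sub h(1)] sgT1[OF act noinv sub TH e] by blast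
  finally show ?thesis .
qed

lemma qrev: "e \<in> arcs T \<Longrightarrow> rev_arc X (orb ae H e) = orb ae H (rev_arc T e)"
proof -
  assume e: "e \<in> arcs T"
  obtain h where h: "h \<in> H" "(SOME y. y \<in> orb ae H e) = ae h e"
    using some_orb[OF AeC grpC sub e] by blast
  have "rev_arc X (orb ae H e) = orb ae H (ae h (rev_arc T e))"
    unfolding quotient_graph_def using h eq_rev[OF act noinv sub TH h(1) e] by simp
  also have "\<dots> = orb ae H (rev_arc T e)"
    using orb_shift[OF AeC grpC sub h(1)] sgT1[OF act noinv sub TH e] by blast
  finally show ?thesis .
qed

lemma arcsX: "arcs X = orb ae H ` ES" unfolding quotient_graph_def by simp
lemma vertsX: "verts X = orb av H ` VS" unfolding quotient_graph_def by simp

lemma src_in: "src X ` arcs X \<subseteq> verts X"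
proof
  fix w assume "w \<in> src X ` arcs X"
  then obtain e where e: "e \<in> ES" "w = src X (orb ae H e)" using arcsX by auto
  then have "w = orb av H (src T e)" using qsrc ES_sub[OF act noinv sub TH] by blast
  then show "w \<in> verts X" using vertsX sg1[OF act noinv sub TH e(1)] by auto
qed

lemma even_arcs: "finite (arcs X) \<Longrightarrow> even (card (arcs X))"
proof -
  assume fin: "finite (arcs X)"
  show ?thesis
  proof (rule even_invol[OF fin, of "rev_arc X"], intro ballI)
    fix Q assume "Q \<in> arcs X"
    then obtain e where e: "e \<in> ES" "Q = orb ae H e" using arcsX by auto
    have eT: "e \<in> arcs T" using e ES_sub[OF act noinv sub TH] by blast
    have s: "rev_arc T e \<in> ES \<and> rev_arc T (rev_arc T e) = e" using sg1[OF act noinv sub TH e(1)] by blast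
    have rT: "rev_arc T e \<in> arcs T" using s ES_sub[OF act noinv sub TH] by blast
    have r: "rev_arc X Q = orb ae H (rev_arc T e)" using qrev eT e by simp
    have "rev_arc X Q \<noteq> Q"
    proof
      assume "rev_arc X Q = Q"
      then have "rev_arc T e \<in> orb ae H e" using r e orb_mem[OF AeC grpC sub rT] by simp
      then obtain h where h: "h \<in> H" "rev_arc T e = ae h e" unfolding orb_def by auto
      moreover have "ae h e \<noteq> rev_arc T e" using noinv HG'[OF act noinv sub TH h(1)] eT unfolding without_inversions_def by blast
      ultimately show False by simp
    qed
    then show "rev_arc X Q \<in> arcs X \<and> rev_arc X (rev_arc X Q) = Q \<and> rev_arc X Q \<noteq> Q"
      using r s qrev[OF rT] e arcsX by auto
  qed
qed

lemma card_le1: "finite S \<Longrightarrow> card S < 2 \<Longrightarrow> a \<in> S \<Longrightarrow> b \<in> S \<Longrightarrow> a = b"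
proof -
  assume "finite S" "card S < 2" "a \<in> S" "b \<in> S"
  moreover have "card S \<le> Suc 0" using \<open>card S < 2\<close> by simp
  ultimately show ?thesis using card_le_Suc0_iff_eq by blast
qed

lemma deg_ge2:
  assumes fin: "finite (arcs X)" and w: "w \<in> verts X" "w \<notin> L"
  shows "deg X w \<ge> 2"
proof (rule ccontr)
  assume lt: "\<not> deg X w \<ge> 2"
  obtain v where v: "v \<in> VS" "w = orb av H v" using w vertsX by auto
  have vT: "v \<in> verts T" using v VS_sub[OF act noinv sub TH] by blast
  have "degenerate T av ae H ES v" using w v unfolding ndeg_verts_def by blast
  then obtain e where e: "e \<in> ES" "src T e = v" "stab av H v = stab ae H e"
    unfolding degenerate_def by blast
  have eT: "e \<in> arcs T" using e ES_sub[OF act noinv sub TH] by blast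
  let ?S = "{Q \<in> arcs X. src X Q = w}"
  have finS: "finite ?S" using fin by simp
  have cS: "card ?S < 2" using lt unfolding deg_def by simp
  have eS: "orb ae H e \<in> ?S" using e eT qsrc v arcsX by auto
  have "\<forall>f\<in>ES. src T f = v \<longrightarrow> f = e"
  proof (intro ballI impI)
    fix f assume f: "f \<in> ES" "src T f = v"
    have fT: "f \<in> arcs T" using f ES_sub[OF act noinv sub TH] by blast
    have "orb ae H f \<in> ?S" using f fT qsrc v arcsX by auto
    then have "orb ae H f = orb ae H e" using card_le1[OF finS cS] eS by blast
    then have "f \<in> orb ae H e" using orb_mem[OF AeC grpC sub fT] by simp
    then obtain h where h: "h \<in> H" "f = ae h e" unfolding orb_def by auto
    have "av h v = v" using eq_src[OF act noinv sub TH h(1) eT] h f e by simp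
    then have "h \<in> stab ae H e" using e h unfolding stab_def by auto
    then show "f = e" using h unfolding stab_def by auto
  qed
  then show False using no_leaf[OF act noinv sub TH v(1) e(1) e(2)] by blast
qed

end


theorem lemma3p1:
  fixes G :: "('g, 'b) monoid_scheme"
    and T :: "('v, 'e) sgraph"
    and av :: "'g \<Rightarrow> 'v \<Rightarrow> 'v" and ae :: "'g \<Rightarrow> 'e \<Rightarrow> 'e"
    and H :: "'g set" and VS :: "'v set" and ES :: "'e set"
  assumes act: "tree_action G T av ae"
    and noinv: "without_inversions G T ae"
    and sub: "subgroup H G"
    and hyp: "\<exists>h\<in>H. hyperbolic T av h"
    and TH: "minimal_invariant_subtree T av ae H VS ES"
    and tame: "finite (verts (quotient_graph T av ae H VS ES))"
              "finite (arcs (quotient_graph T av ae H VS ES))"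
  shows "Cbar_T T av ae H VS ES
           = rbar (attach_loops (quotient_graph T av ae H VS ES) (ndeg_verts T av ae H VS ES))
       \<and> real_of_int (rbar (attach_loops (quotient_graph T av ae H VS ES) (ndeg_verts T av ae H VS ES)))
           = (1/2) * (\<Sum>w \<in> verts (attach_loops (quotient_graph T av ae H VS ES) (ndeg_verts T av ae H VS ES)).
                 (real (deg (attach_loops (quotient_graph T av ae H VS ES) (ndeg_verts T av ae H VS ES)) w) - 2))"
proof -
  define X where "X = quotient_graph T av ae H VS ES"
  define L where "L = ndeg_verts T av ae H VS ES"
  define Xt where "Xt = attach_loops X L"
  have fV: "finite (verts X)" and fA: "finite (arcs X)" using tame unfolding X_def by auto
  have LV: "L \<subseteq> verts X" unfolding L_def X_def ndeg_verts_def quotient_graph_def by auto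
  have fL: "finite L" using LV fV finite_subset by blast
  have arcsXt: "arcs Xt = Inl ` arcs X \<union> Inr ` (L \<times> UNIV)" unfolding Xt_def attach_loops_def by simp
  have vXt: "verts Xt = verts X" unfolding Xt_def attach_loops_def by simp
  have fAt: "finite (arcs Xt)" using arcsXt fA fL by simp
  have cAt: "card (arcs Xt) = card (arcs X) + 2 * card L"
  proof -
    have "card (arcs Xt) = card (Inl ` arcs X :: ('e set + 'v set \<times> bool) set) + card (Inr ` (L \<times> (UNIV :: bool set)) :: ('e set + 'v set \<times> bool) set)"
      unfolding arcsXt by (rule card_Un_disjoint) (use fA fL in auto)
    also have "\<dots> = card (arcs X) + card (L \<times> (UNIV :: bool set))"
      by (simp add: card_image)
    also have "\<dots> = card (arcs X) + 2 * card L" by (simp add: card_cartesian_product)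
    finally show ?thesis .
  qed
  have srcX: "src X ` arcs X \<subseteq> verts X" using src_in[OF act noinv sub TH] unfolding X_def .
  have srcXt: "src Xt ` arcs Xt \<subseteq> verts X"
    using srcX LV unfolding arcsXt by (auto simp: Xt_def attach_loops_def)
  have sumt: "(\<Sum>w\<in>verts X. deg Xt w) = card (arcs Xt)"
    unfolding deg_def by (rule card_fibers[OF fAt fV srcXt])
  have sumX: "(\<Sum>w\<in>verts X. deg X w) = card (arcs X)"
    unfolding deg_def by (rule card_fibers[OF fA fV srcX])
  have bound: "2 * (card (verts X) - card L) \<le> card (arcs X)"
  proof -
    have "2 * (card (verts X) - card L) = 2 * card (verts X - L)" using card_Diff_subset[OF fL LV] by simp
    also have "\<dots> = (\<Sum>w\<in>verts X - L. 2)" by simp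
    also have "\<dots> \<le> (\<Sum>w\<in>verts X - L. deg X w)"
      by (rule sum_mono) (use deg_ge2[OF act noinv sub TH] fA in \<open>auto simp: X_def L_def\<close>)
    also have "\<dots> \<le> (\<Sum>w\<in>verts X. deg X w)" by (rule sum_mono2) (use fV in auto)
    finally show ?thesis using sumX by simp
  qed
  have ev: "even (card (arcs X))" using even_arcs[OF act noinv sub TH] fA unfolding X_def by blast
  then obtain k where k: "card (arcs X) = 2 * k" by blast
  have gr: "graph_rank Xt = int k + int (card L) - int (card (verts X)) + 1"
    unfolding graph_rank_def vXt cAt k by simp
  have c1: "Cbar_T T av ae H VS ES = rbar Xt"
    unfolding Cbar_T_def C_T_def rbar_def gr
    by (simp add: X_def[symmetric] L_def[symmetric] graph_rank_def k)
  have LVc: "card L \<le> card (verts X)" using card_mono[OF fV LV] .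
  have r: "rbar Xt = int k + int (card L) - int (card (verts X))"
    unfolding rbar_def gr using bound k LVc by simp
  have s: "(\<Sum>w \<in> verts Xt. (real (deg Xt w) - 2)) = real (card (arcs Xt)) - 2 * real (card (verts X))"
    unfolding vXt sum_subtractf using sumt by (simp add: of_nat_sum[symmetric])
  have c2: "real_of_int (rbar Xt) = (1/2) * (\<Sum>w \<in> verts Xt. (real (deg Xt w) - 2))"
    unfolding s r cAt k by simp
  show ?thesis using c1 c2 unfolding Xt_def X_def L_def by simp
qed


end
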